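(* Let $O$ be a random vector containing $Z$, let $S_{ab}$ be a known function of $O$, and let $h\mapsto m_a(O,h)$ be a map that is linear a.s. on $L_2(P_{Z})$ with $h\mapsto E[m_a(O,h)]$ continuous. Assume there is a linear map $h\mapsto m_a^\ddagger(o,h)$ on $L_2(P_Z)$ such that $h\mapsto E[m_a^\ddagger(O,h)]$ is continuous with Riesz representer $\mathcal R_a^\ddagger(Z)$, $|m_a(o,h)|\le m_a^\ddagger(o,|h|)$ for all $o$ and all $h\in L_2(P_Z)$, and $E[(\mathcal R_a^\ddagger)^2]\le K$. Assume $a\in\mathcal G_n(\phi,s_a,2,\varphi)$ with associated parameter $\theta_a^*$, where $s_a\log(p)/\sqrt n\to0$, and let $r(Z)=a(Z)-\varphi(\langle\theta^*_a,\phi(Z)\rangle)$. Let $h$ be such that $E[(S_{ab}h)^2]\le K$. Then $\sqrt n\,E\big[|S_{ab}h\,r+m_a(O,r)|\big]\to0$.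
   Context: Asymptotics are in $n$ and all quantities may depend on $n$; $K$ is a fixed positive constant. $\phi(Z)=(\phi_1(Z),\dots,\phi_p(Z))^\top$, $p=p(n)$. $\mathcal G_n(\phi,s,j,\varphi)$ is the set of functions $c(Z)$ for which there exist $\theta^*\in\mathbb R^p$ with $\|\theta^*\|_0\le s$ and $r(Z)$ with $c(Z)=\varphi(\langle\theta^*,\phi(Z)\rangle)+r(Z)$ and $E[r(Z)^2]\le K(s\log(p)/n)^j$; $\theta^*$ is the associated parameter. *)

theory Defs
  imports "HOL-Probability.Probability"
begin

text \<open>The random vector O is the sample point of the probability space M;
  Z = Zf O with values in the measurable space N.  L2(P_Z) is represented by
  measurable h on N with E[h(Z)^2] finite.\<close>

definition L2Z :: "'o measure \<Rightarrow> ('o \<Rightarrow> 'z) \<Rightarrow> 'z measure \<Rightarrow> ('z \<Rightarrow> real) set" where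
  "L2Z M Zf N = {h. h \<in> borel_measurable N \<and> integrable M (\<lambda>\<omega>. (h (Zf \<omega>))\<^sup>2)}"

definition L2_continuous ::
  "'o measure \<Rightarrow> ('o \<Rightarrow> 'z) \<Rightarrow> 'z measure \<Rightarrow> (('z \<Rightarrow> real) \<Rightarrow> real) \<Rightarrow> bool" where
  "L2_continuous M Zf N F \<longleftrightarrow>
     (\<forall>h\<in>L2Z M Zf N. \<forall>e>0. \<exists>d>0. \<forall>g\<in>L2Z M Zf N.
        sqrt (\<integral>\<omega>. (g (Zf \<omega>) - h (Zf \<omega>))\<^sup>2 \<partial>M) < d \<longrightarrow> \<bar>F g - F h\<bar> < e)"

text \<open>Membership c \<in> G_n(phi, s, j, varphi) with associated parameter theta
  (theta given as a function on indices 0..<p, phi_j indexed 0..<p).\<close>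
definition in_Gn ::
  "'o measure \<Rightarrow> ('o \<Rightarrow> 'z) \<Rightarrow> 'z measure \<Rightarrow> real \<Rightarrow> nat \<Rightarrow>
   (nat \<Rightarrow> 'z \<Rightarrow> real) \<Rightarrow> nat \<Rightarrow> nat \<Rightarrow> nat \<Rightarrow> (real \<Rightarrow> real) \<Rightarrow> ('z \<Rightarrow> real) \<Rightarrow> (nat \<Rightarrow> real) \<Rightarrow> bool" where
  "in_Gn M Zf N K n \<phi> p s j \<psi> c \<theta> \<longleftrightarrow>
     card {i. i < p \<and> \<theta> i \<noteq> 0} \<le> s \<and>
     (\<lambda>z. c z - \<psi> (\<Sum>i<p. \<theta> i * \<phi> i z)) \<in> L2Z M Zf N \<and>
     (\<integral>\<omega>. (c (Zf \<omega>) - \<psi> (\<Sum>i<p. \<theta> i * \<phi> i (Zf \<omega>)))\<^sup>2 \<partial>M)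
        \<le> K * (real s * ln (real p) / real n) ^ j"

end

theory Submission
  imports Defs
begin

lemma cancel_aux: "(q::real) > 0 \<Longrightarrow> q * y / (q * q) = y / q"
  by simp

lemma disc_aux:
  fixes A B C :: real
  assumes "0 \<le> A" "0 \<le> C" and H: "\<And>t. 0 \<le> t^2 * A - 2 * t * C + B"
  shows "C^2 \<le> A * B"
proof (cases "A > 0")
  case True
  have "0 \<le> (C/A)^2 * A - 2 * (C/A) * C + B" by (rule H)
  also have "\<dots> = B - C^2 / A" using True by (simp add: field_simps power2_eq_square)
  finally show ?thesis using True by (simp add: field_simps)
next
  case False
  hence A0: "A = 0" using assms by simp
  show ?thesis
  proof (cases "C = 0")
    case False
    hence Cp: "C > 0" using assms by simp
    have "0 \<le> ((\<bar>B\<bar>+1)/(2*C))^2 * A - 2 * ((\<bar>B\<bar>+1)/(2*C)) * C + B" by (rule H)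
    also have "\<dots> = B - (\<bar>B\<bar>+1)" using A0 Cp by (simp add: field_simps)
    finally show ?thesis by simp
  qed (simp add: A0)
qed

lemma cs_L2:
  fixes f g :: "'a \<Rightarrow> real"
  assumes [measurable]: "f \<in> borel_measurable M" "g \<in> borel_measurable M"
    and fi: "integrable M (\<lambda>x. (f x)^2)" and gi: "integrable M (\<lambda>x. (g x)^2)"
  shows cs_int: "integrable M (\<lambda>x. f x * g x)"
    and cs_ineq: "(\<integral>x. \<bar>f x * g x\<bar> \<partial>M)^2 \<le> (\<integral>x. (f x)^2 \<partial>M) * (\<integral>x. (g x)^2 \<partial>M)"
proof -
  have fgi: "integrable M (\<lambda>x. (f x)^2 + (g x)^2)" using fi gi by simp
  have b: "\<bar>f x * g x\<bar> \<le> (f x)^2 + (g x)^2" for x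
  proof -
    have "0 \<le> (\<bar>f x\<bar> - \<bar>g x\<bar>)^2" by (rule zero_le_power2)
    also have "\<dots> = (f x)^2 + (g x)^2 - 2 * \<bar>f x\<bar> * \<bar>g x\<bar>"
      by (simp only: power2_diff power2_abs)
    finally have c1: "2 * (\<bar>f x\<bar> * \<bar>g x\<bar>) \<le> (f x)^2 + (g x)^2" by linarith
    have c2: "0 \<le> \<bar>f x\<bar> * \<bar>g x\<bar>" by (rule mult_nonneg_nonneg) auto
    show ?thesis unfolding abs_mult using c1 c2 by linarith
  qed
  show I: "integrable M (\<lambda>x. f x * g x)"
    by (rule Bochner_Integration.integrable_bound[OF fgi]) (auto intro!: AE_I2 order_trans[OF b])
  hence Ia: "integrable M (\<lambda>x. \<bar>f x * g x\<bar>)" by simp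
  show "(\<integral>x. \<bar>f x * g x\<bar> \<partial>M)^2 \<le> (\<integral>x. (f x)^2 \<partial>M) * (\<integral>x. (g x)^2 \<partial>M)"
  proof (rule disc_aux)
    show "0 \<le> (\<integral>x. (f x)^2 \<partial>M)" by simp
    show "0 \<le> (\<integral>x. \<bar>f x * g x\<bar> \<partial>M)" by simp
    fix t :: real
    have eq: "(t * \<bar>f x\<bar> - \<bar>g x\<bar>)^2 = t^2 * (f x)^2 - 2 * t * \<bar>f x * g x\<bar> + (g x)^2" for x
      by (simp add: power2_eq_square algebra_simps abs_mult)
    have "0 \<le> (\<integral>x. (t * \<bar>f x\<bar> - \<bar>g x\<bar>)^2 \<partial>M)" by simp
    also have "\<dots> = (\<integral>x. t^2 * (f x)^2 - 2 * t * \<bar>f x * g x\<bar> + (g x)^2 \<partial>M)"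
      by (simp only: eq)
    also have "\<dots> = t^2 * (\<integral>x. (f x)^2 \<partial>M) - 2 * t * (\<integral>x. \<bar>f x * g x\<bar> \<partial>M) + (\<integral>x. (g x)^2 \<partial>M)"
      using fi gi Ia by (simp add: integral_add integral_diff)
    finally show "0 \<le> t^2 * (\<integral>x. (f x)^2 \<partial>M) - 2 * t * (\<integral>x. \<bar>f x * g x\<bar> \<partial>M) + (\<integral>x. (g x)^2 \<partial>M)" .
  qed
qed

theorem lemma9:
  fixes M :: "nat \<Rightarrow> 'o measure" and N :: "'z measure" and Zf :: "'o \<Rightarrow> 'z"
    and K :: real
    and S :: "nat \<Rightarrow> 'o \<Rightarrow> real"
    and m :: "nat \<Rightarrow> 'o \<Rightarrow> ('z \<Rightarrow> real) \<Rightarrow> real"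
    and md :: "nat \<Rightarrow> 'o \<Rightarrow> ('z \<Rightarrow> real) \<Rightarrow> real"
    and R :: "nat \<Rightarrow> 'z \<Rightarrow> real"
    and \<phi> :: "nat \<Rightarrow> nat \<Rightarrow> 'z \<Rightarrow> real" and p :: "nat \<Rightarrow> nat" and s :: "nat \<Rightarrow> nat"
    and \<psi> :: "nat \<Rightarrow> real \<Rightarrow> real" and a :: "nat \<Rightarrow> 'z \<Rightarrow> real"
    and \<theta> :: "nat \<Rightarrow> nat \<Rightarrow> real" and h :: "nat \<Rightarrow> 'z \<Rightarrow> real"
  assumes K_pos: "K > 0"
    and prob: "\<And>n. prob_space (M n)"
    and Zmeas: "\<And>n. Zf \<in> measurable (M n) N"
    and S_meas: "\<And>n. S n \<in> borel_measurable (M n)"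
    \<comment> \<open>m_a: linear a.s. on L2(P_Z), E[m_a(O,h)] defined and continuous\<close>
    and m_int: "\<And>n g. g \<in> L2Z (M n) Zf N \<Longrightarrow> integrable (M n) (\<lambda>\<omega>. m n \<omega> g)"
    and m_lin: "\<And>n g1 g2 c1 c2. g1 \<in> L2Z (M n) Zf N \<Longrightarrow> g2 \<in> L2Z (M n) Zf N \<Longrightarrow>
        AE \<omega> in M n. m n \<omega> (\<lambda>z. c1 * g1 z + c2 * g2 z) = c1 * m n \<omega> g1 + c2 * m n \<omega> g2"
    and m_cont: "\<And>n. L2_continuous (M n) Zf N (\<lambda>g. \<integral>\<omega>. m n \<omega> g \<partial>M n)"
    \<comment> \<open>m_a dagger: linear, continuous expectation with Riesz representer R\<close>
    and md_int: "\<And>n g. g \<in> L2Z (M n) Zf N \<Longrightarrow> integrable (M n) (\<lambda>\<omega>. md n \<omega> g)"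
    and md_lin: "\<And>n \<omega> g1 g2 c1 c2. g1 \<in> L2Z (M n) Zf N \<Longrightarrow> g2 \<in> L2Z (M n) Zf N \<Longrightarrow>
        md n \<omega> (\<lambda>z. c1 * g1 z + c2 * g2 z) = c1 * md n \<omega> g1 + c2 * md n \<omega> g2"
    and md_cont: "\<And>n. L2_continuous (M n) Zf N (\<lambda>g. \<integral>\<omega>. md n \<omega> g \<partial>M n)"
    and R_L2: "\<And>n. R n \<in> L2Z (M n) Zf N"
    and R_riesz: "\<And>n g. g \<in> L2Z (M n) Zf N \<Longrightarrow>
        (\<integral>\<omega>. md n \<omega> g \<partial>M n) = (\<integral>\<omega>. R n (Zf \<omega>) * g (Zf \<omega>) \<partial>M n)"
    and dom: "\<And>n \<omega> g. g \<in> L2Z (M n) Zf N \<Longrightarrow> \<bar>m n \<omega> g\<bar> \<le> md n \<omega> (\<lambda>z. \<bar>g z\<bar>)"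
    and R_bound: "\<And>n. (\<integral>\<omega>. (R n (Zf \<omega>))\<^sup>2 \<partial>M n) \<le> K"
    \<comment> \<open>a \<in> G_n(phi, s_a, 2, varphi) with associated parameter theta\<close>
    and a_G: "\<And>n. in_Gn (M n) Zf N K n (\<phi> n) (p n) (s n) 2 (\<psi> n) (a n) (\<theta> n)"
    and rate: "(\<lambda>n. real (s n) * ln (real (p n)) / sqrt (real n)) \<longlonglongrightarrow> 0"
    \<comment> \<open>h with E[(S h)^2] \<le> K\<close>
    and h_meas: "\<And>n. h n \<in> borel_measurable N"
    and Sh_int: "\<And>n. integrable (M n) (\<lambda>\<omega>. (S n \<omega> * h n (Zf \<omega>))\<^sup>2)"
    and Sh_bound: "\<And>n. (\<integral>\<omega>. (S n \<omega> * h n (Zf \<omega>))\<^sup>2 \<partial>M n) \<le> K"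
  shows "(\<lambda>n. let r = (\<lambda>z. a n z - \<psi> n (\<Sum>i<p n. \<theta> n i * \<phi> n i z)) in
            sqrt (real n) * (\<integral>\<omega>. \<bar>S n \<omega> * h n (Zf \<omega>) * r (Zf \<omega>) + m n \<omega> r\<bar> \<partial>M n))
         \<longlonglongrightarrow> 0"
proof -
  have bound: "sqrt (real n) * (\<integral>\<omega>. \<bar>S n \<omega> * h n (Zf \<omega>) * (a n (Zf \<omega>) - \<psi> n (\<Sum>i<p n. \<theta> n i * \<phi> n i (Zf \<omega>))) + m n \<omega> (\<lambda>z. a n z - \<psi> n (\<Sum>i<p n. \<theta> n i * \<phi> n i z))\<bar> \<partial>M n)
      \<le> 2 * K * \<bar>real (s n) * ln (real (p n)) / sqrt (real n)\<bar>" if npos: "n > 0" for n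
  proof -
    define r where "r = (\<lambda>z. a n z - \<psi> n (\<Sum>i<p n. \<theta> n i * \<phi> n i z))"
    define e where "e = real (s n) * ln (real (p n)) / real n"
    have rL2: "r \<in> L2Z (M n) Zf N" and Er2: "(\<integral>\<omega>. (r (Zf \<omega>))\<^sup>2 \<partial>M n) \<le> K * e^2"
      using a_G[of n] unfolding in_Gn_def r_def e_def by auto
    have rm: "r \<in> borel_measurable N" and r2i: "integrable (M n) (\<lambda>\<omega>. (r (Zf \<omega>))\<^sup>2)"
      using rL2 unfolding L2Z_def by auto
    have rZm: "(\<lambda>\<omega>. r (Zf \<omega>)) \<in> borel_measurable (M n)"
      using measurable_comp[OF Zmeas rm] by (simp add: comp_def)
    have arL2: "(\<lambda>z. \<bar>r z\<bar>) \<in> L2Z (M n) Zf N"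
      using rm r2i unfolding L2Z_def by auto
    have arZm: "(\<lambda>\<omega>. \<bar>r (Zf \<omega>)\<bar>) \<in> borel_measurable (M n)" using rZm by measurable
    have ar2i: "integrable (M n) (\<lambda>\<omega>. (\<bar>r (Zf \<omega>)\<bar>)\<^sup>2)" using r2i by simp
    have hZm: "(\<lambda>\<omega>. h n (Zf \<omega>)) \<in> borel_measurable (M n)"
      using measurable_comp[OF Zmeas h_meas] by (simp add: comp_def)
    have Shm: "(\<lambda>\<omega>. S n \<omega> * h n (Zf \<omega>)) \<in> borel_measurable (M n)"
      using S_meas[of n] hZm by measurable
    have Rm: "R n \<in> borel_measurable N" and R2i: "integrable (M n) (\<lambda>\<omega>. (R n (Zf \<omega>))\<^sup>2)"
      using R_L2[of n] unfolding L2Z_def by auto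
    have RZm: "(\<lambda>\<omega>. R n (Zf \<omega>)) \<in> borel_measurable (M n)"
      using measurable_comp[OF Zmeas Rm] by (simp add: comp_def)
    have Ke: "0 \<le> K * \<bar>e\<bar>" using K_pos by simp
    have sqK: "K * (K * e^2) = (K * \<bar>e\<bar>)^2" by (simp add: power2_eq_square)
    have I1: "integrable (M n) (\<lambda>\<omega>. S n \<omega> * h n (Zf \<omega>) * r (Zf \<omega>))"
      by (rule cs_int[OF Shm rZm Sh_int r2i])
    have "(\<integral>\<omega>. \<bar>S n \<omega> * h n (Zf \<omega>) * r (Zf \<omega>)\<bar> \<partial>M n)^2
        \<le> (\<integral>\<omega>. (S n \<omega> * h n (Zf \<omega>))\<^sup>2 \<partial>M n) * (\<integral>\<omega>. (r (Zf \<omega>))\<^sup>2 \<partial>M n)"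
      by (rule cs_ineq[OF Shm rZm Sh_int r2i])
    also have "\<dots> \<le> K * (K * e^2)"
      using Sh_bound[of n] Er2 K_pos by (intro mult_mono) auto
    finally have "(\<integral>\<omega>. \<bar>S n \<omega> * h n (Zf \<omega>) * r (Zf \<omega>)\<bar> \<partial>M n)^2 \<le> (K * \<bar>e\<bar>)^2"
      by (simp only: sqK)
    from power2_le_imp_le[OF this Ke]
    have T1: "(\<integral>\<omega>. \<bar>S n \<omega> * h n (Zf \<omega>) * r (Zf \<omega>)\<bar> \<partial>M n) \<le> K * \<bar>e\<bar>" .
    have Im: "integrable (M n) (\<lambda>\<omega>. m n \<omega> r)" by (rule m_int[OF rL2])
    have Imd: "integrable (M n) (\<lambda>\<omega>. md n \<omega> (\<lambda>z. \<bar>r z\<bar>))" by (rule md_int[OF arL2])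
    have IR: "integrable (M n) (\<lambda>\<omega>. R n (Zf \<omega>) * \<bar>r (Zf \<omega>)\<bar>)"
      by (rule cs_int[OF RZm arZm R2i ar2i])
    have "(\<integral>\<omega>. \<bar>m n \<omega> r\<bar> \<partial>M n) \<le> (\<integral>\<omega>. md n \<omega> (\<lambda>z. \<bar>r z\<bar>) \<partial>M n)"
      using Im Imd dom[OF rL2] by (intro integral_mono) auto
    also have "\<dots> = (\<integral>\<omega>. R n (Zf \<omega>) * \<bar>r (Zf \<omega>)\<bar> \<partial>M n)"
      by (rule R_riesz[OF arL2])
    also have "\<dots> \<le> (\<integral>\<omega>. \<bar>R n (Zf \<omega>) * \<bar>r (Zf \<omega>)\<bar>\<bar> \<partial>M n)"
      using IR by (intro integral_mono) auto
    finally have T2a: "(\<integral>\<omega>. \<bar>m n \<omega> r\<bar> \<partial>M n) \<le> (\<integral>\<omega>. \<bar>R n (Zf \<omega>) * \<bar>r (Zf \<omega>)\<bar>\<bar> \<partial>M n)" .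
    have "(\<integral>\<omega>. \<bar>R n (Zf \<omega>) * \<bar>r (Zf \<omega>)\<bar>\<bar> \<partial>M n)^2
        \<le> (\<integral>\<omega>. (R n (Zf \<omega>))\<^sup>2 \<partial>M n) * (\<integral>\<omega>. (\<bar>r (Zf \<omega>)\<bar>)\<^sup>2 \<partial>M n)"
      by (rule cs_ineq[OF RZm arZm R2i ar2i])
    also have "\<dots> \<le> K * (K * e^2)"
      using R_bound[of n] Er2 K_pos by (intro mult_mono) auto
    finally have "(\<integral>\<omega>. \<bar>R n (Zf \<omega>) * \<bar>r (Zf \<omega>)\<bar>\<bar> \<partial>M n)^2 \<le> (K * \<bar>e\<bar>)^2"
      by (simp only: sqK)
    from power2_le_imp_le[OF this Ke]
    have T2b: "(\<integral>\<omega>. \<bar>R n (Zf \<omega>) * \<bar>r (Zf \<omega>)\<bar>\<bar> \<partial>M n) \<le> K * \<bar>e\<bar>" .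
    have "(\<integral>\<omega>. \<bar>S n \<omega> * h n (Zf \<omega>) * r (Zf \<omega>) + m n \<omega> r\<bar> \<partial>M n)
        \<le> (\<integral>\<omega>. \<bar>S n \<omega> * h n (Zf \<omega>) * r (Zf \<omega>)\<bar> + \<bar>m n \<omega> r\<bar> \<partial>M n)"
      using I1 Im by (intro integral_mono) auto
    also have "\<dots> = (\<integral>\<omega>. \<bar>S n \<omega> * h n (Zf \<omega>) * r (Zf \<omega>)\<bar> \<partial>M n) + (\<integral>\<omega>. \<bar>m n \<omega> r\<bar> \<partial>M n)"
      using I1 Im by (intro Bochner_Integration.integral_add) (simp_all add: integrable_abs)
    also have "\<dots> \<le> 2 * K * \<bar>e\<bar>" using T1 T2a T2b by linarith
    finally have Q: "(\<integral>\<omega>. \<bar>S n \<omega> * h n (Zf \<omega>) * r (Zf \<omega>) + m n \<omega> r\<bar> \<partial>M n) \<le> 2 * K * \<bar>e\<bar>" .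
    have sq: "sqrt (real n) * \<bar>e\<bar> = \<bar>real (s n) * ln (real (p n)) / sqrt (real n)\<bar>"
    proof -
      have sp: "sqrt (real n) > 0" using npos by simp
      have "sqrt (real n) * \<bar>e\<bar> = \<bar>sqrt (real n) * e\<bar>" using sp by (simp add: abs_mult)
      also have "sqrt (real n) * e = real (s n) * ln (real (p n)) / sqrt (real n)"
      proof -
        have "real n = sqrt (real n) * sqrt (real n)" by simp
        hence "sqrt (real n) * e = sqrt (real n) * (real (s n) * ln (real (p n))) / (sqrt (real n) * sqrt (real n))"
          unfolding e_def by (metis times_divide_eq_right)
        also have "\<dots> = real (s n) * ln (real (p n)) / sqrt (real n)"
          using sp by (rule cancel_aux)
        finally show ?thesis .
      qed
      finally show ?thesis .
    qed
    have "sqrt (real n) * (\<integral>\<omega>. \<bar>S n \<omega> * h n (Zf \<omega>) * r (Zf \<omega>) + m n \<omega> r\<bar> \<partial>M n)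
        \<le> sqrt (real n) * (2 * K * \<bar>e\<bar>)"
      using Q by (intro mult_left_mono) auto
    also have "\<dots> = 2 * K * (sqrt (real n) * \<bar>e\<bar>)" by (simp only: mult_ac)
    also have "\<dots> = 2 * K * \<bar>real (s n) * ln (real (p n)) / sqrt (real n)\<bar>"
      by (simp only: sq)
    finally show ?thesis unfolding r_def .
  qed
  have g0: "(\<lambda>n. 2 * K * \<bar>real (s n) * ln (real (p n)) / sqrt (real n)\<bar>) \<longlonglongrightarrow> 0"
    using tendsto_mult_right_zero[OF tendsto_rabs_zero[OF rate], of "2 * K"] by simp
  show ?thesis unfolding Let_def
  proof (rule Lim_null_comparison[OF _ g0])
    show "\<forall>\<^sub>F n in sequentially. norm (sqrt (real n) * (\<integral>\<omega>. \<bar>S n \<omega> * h n (Zf \<omega>) * (a n (Zf \<omega>) - \<psi> n (\<Sum>i<p n. \<theta> n i * \<phi> n i (Zf \<omega>))) + m n \<omega> (\<lambda>z. a n z - \<psi> n (\<Sum>i<p n. \<theta> n i * \<phi> n i z))\<bar> \<partial>M n))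
      \<le> 2 * K * \<bar>real (s n) * ln (real (p n)) / sqrt (real n)\<bar>"
      using eventually_gt_at_top[of "0::nat"]
    proof eventually_elim
      case (elim n)
      have "0 \<le> sqrt (real n) * (\<integral>\<omega>. \<bar>S n \<omega> * h n (Zf \<omega>) * (a n (Zf \<omega>) - \<psi> n (\<Sum>i<p n. \<theta> n i * \<phi> n i (Zf \<omega>))) + m n \<omega> (\<lambda>z. a n z - \<psi> n (\<Sum>i<p n. \<theta> n i * \<phi> n i z))\<bar> \<partial>M n)"
        by simp
      then show ?case using bound[OF elim] by simp
    qed
  qed
qed

end
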